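(* Let $p$ be an odd prime and $q=2(p-1)$. Let $t\geq 0$ be an integer written as $t=q(c_np^n+\cdots+c_1p+c_0)+c_{-1}$ with $0\leq c_i<p$ for $0\leq i\leq n$ and $0\leq c_{-1}<q$. Let $s_1$ be an integer with $0<s_1<q$. If $c_{-1}>s_1$, then in the May spectral sequence $E_1^{s_1,t,*}=0$.
   Context: The May spectral sequence $\{E_r^{s,t,u},d_r\}$ (for the mod $p$ Steenrod algebra) has $E_1^{*,*,*}=E(h_{i,j}\mid i>0,j\geq 0)\otimes P(b_{i,j}\mid i>0,j\geq 0)\otimes P(a_k\mid k\geq 0)$ ($E$ exterior, $P$ polynomial), with $h_{i,j}\in E_1^{1,2(p^i-1)p^j,2i-1}$, $b_{i,j}\in E_1^{2,2(p^i-1)p^{j+1},p(2i-1)}$, $a_k\in E_1^{1,2p^k-1,2k+1}$. $E_1^{s,t,*}$ denotes the direct sum over all values of the third index. *)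

theory Defs
  imports Main "HOL-Computational_Algebra.Primes"
begin

text \<open>A monomial in E_1 = E(h_{i,j}) (x) P(b_{i,j}) (x) P(a_k) is encoded by its exponent
functions: h (i,j) in {0,1} (exterior), b (i,j) and a k arbitrary naturals; all finitely
supported, and h (0,j) = b (0,j) = 0 since the generators require i > 0.
These monomials form an F_p-basis of E_1.\<close>

type_synonym may_monomial = "((nat \<times> nat) \<Rightarrow> nat) \<times> ((nat \<times> nat) \<Rightarrow> nat) \<times> (nat \<Rightarrow> nat)"

definition supp :: "('a \<Rightarrow> nat) \<Rightarrow> 'a set" where
  "supp f = {x. f x \<noteq> 0}"

definition is_may_monomial :: "may_monomial \<Rightarrow> bool" where
  "is_may_monomial m = (case m of (h, b, a) \<Rightarrow>
      finite (supp h) \<and> finite (supp b) \<and> finite (supp a) \<and>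
      (\<forall>ij. h ij \<le> 1) \<and> (\<forall>j. h (0, j) = 0 \<and> b (0, j) = 0))"

definition mon_s :: "may_monomial \<Rightarrow> nat" where
  "mon_s m = (case m of (h, b, a) \<Rightarrow>
      (\<Sum>ij\<in>supp h. h ij) + (\<Sum>ij\<in>supp b. 2 * b ij) + (\<Sum>k\<in>supp a. a k))"

definition mon_t :: "nat \<Rightarrow> may_monomial \<Rightarrow> nat" where
  "mon_t p m = (case m of (h, b, a) \<Rightarrow>
      (\<Sum>(i,j)\<in>supp h. h (i,j) * (2 * (p ^ i - 1) * p ^ j))
    + (\<Sum>(i,j)\<in>supp b. b (i,j) * (2 * (p ^ i - 1) * p ^ (j + 1)))
    + (\<Sum>k\<in>supp a. a k * (2 * p ^ k - 1)))"

text \<open>The monomial basis of E_1^{s,t,*} (direct sum over the third (May) grading).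
E_1^{s,t,*} = 0 iff this basis is empty.\<close>
definition may_E1_basis :: "nat \<Rightarrow> nat \<Rightarrow> nat \<Rightarrow> may_monomial set" where
  "may_E1_basis p s t = {m. is_may_monomial m \<and> mon_s m = s \<and> mon_t p m = t}"

end

theory Submission
  imports Defs
begin

lemma pm1_dvd: "(p::nat) \<ge> 1 \<Longrightarrow> (p - 1) dvd (p ^ i - 1)"
proof (induction i)
  case 0 then show ?case by simp
next
  case (Suc i)
  have pi: "p ^ i \<ge> 1" using Suc.prems by simp
  have "p ^ Suc i - 1 = p * (p ^ i - 1) + (p - 1)"
    using pi Suc.prems by (simp add: right_diff_distrib')
  then show ?case using Suc by (metis dvd_add dvd_mult dvd_refl)
qed

theorem lemma2p2:
  fixes p q t s1 n cm1 :: nat and c :: "nat \<Rightarrow> nat"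
  assumes "prime p" and "odd p" and "q = 2 * (p - 1)"
    and "\<forall>i\<le>n. c i < p" and "cm1 < q"
    and "t = q * (\<Sum>i\<le>n. c i * p ^ i) + cm1"
    and "0 < s1" and "s1 < q"
    and "cm1 > s1"
  shows "may_E1_basis p s1 t = {}"
proof (rule ccontr)
  assume "may_E1_basis p s1 t \<noteq> {}"
  then obtain h b a where m: "is_may_monomial (h,b,a)" "mon_s (h,b,a) = s1" "mon_t p (h,b,a) = t"
    unfolding may_E1_basis_def by auto
  have p1: "p \<ge> 1" using prime_gt_0_nat[OF assms(1)] by simp
  have dv: "\<And>i. q dvd 2 * (p ^ i - 1)" using pm1_dvd[OF p1] assms(3) by simp
  define A where "A = (\<Sum>k\<in>supp a. a k)"
  have A_le: "A \<le> s1" using m(2) unfolding mon_s_def A_def by simp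
  have H: "q dvd (\<Sum>(i,j)\<in>supp h. h (i,j) * (2 * (p ^ i - 1) * p ^ j))"
    by (rule dvd_sum) (unfold case_prod_unfold, rule dvd_mult, rule dvd_mult2, rule dv)
  have B: "q dvd (\<Sum>(i,j)\<in>supp b. b (i,j) * (2 * (p ^ i - 1) * p ^ (j + 1)))"
    by (rule dvd_sum) (unfold case_prod_unfold, rule dvd_mult, rule dvd_mult2, rule dv)
  have aeq: "\<And>k. a k * (2 * p ^ k - 1) = a k + a k * (2 * (p ^ k - 1))"
  proof -
    fix k
    have "p ^ k \<ge> 1" using p1 by simp
    then have "2 * p ^ k - 1 = 1 + 2 * (p ^ k - 1)" by simp
    then show "a k * (2 * p ^ k - 1) = a k + a k * (2 * (p ^ k - 1))" by (simp add: algebra_simps)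
  qed
  have Aeq: "(\<Sum>k\<in>supp a. a k * (2 * p ^ k - 1)) = A + (\<Sum>k\<in>supp a. a k * (2 * (p ^ k - 1)))"
    unfolding A_def by (subst aeq) (rule sum.distrib)
  have A2: "q dvd (\<Sum>k\<in>supp a. a k * (2 * (p ^ k - 1)))"
    by (rule dvd_sum) (rule dvd_mult, rule dv)
  obtain X where X: "t = q * X + A"
  proof -
    define S1 where "S1 = (\<Sum>(i,j)\<in>supp h. h (i,j) * (2 * (p ^ i - 1) * p ^ j))"
    define S2 where "S2 = (\<Sum>(i,j)\<in>supp b. b (i,j) * (2 * (p ^ i - 1) * p ^ (j + 1)))"
    define S3 where "S3 = (\<Sum>k\<in>supp a. a k * (2 * (p ^ k - 1)))"
    have tS: "t = S1 + S2 + (A + S3)" using m(3) Aeq unfolding mon_t_def S1_def S2_def S3_def by simp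
    from H obtain x1 where "(\<Sum>(i,j)\<in>supp h. h (i,j) * (2 * (p ^ i - 1) * p ^ j)) = q * x1" by blast
    moreover from B obtain x2 where "(\<Sum>(i,j)\<in>supp b. b (i,j) * (2 * (p ^ i - 1) * p ^ (j + 1))) = q * x2" by blast
    moreover from A2 obtain x3 where "(\<Sum>k\<in>supp a. a k * (2 * (p ^ k - 1))) = q * x3" by blast
    ultimately have "t = q * (x1 + x2 + x3) + A"
      unfolding tS S1_def S2_def S3_def by (simp add: add_mult_distrib2)
    then show ?thesis using that by blast
  qed
  have "t mod q = cm1" using assms(5,6) by simp
  moreover have "t mod q = A" using X A_le assms(8) by simp
  ultimately show False using A_le assms(9) by simp
qed

end
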